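(* Let $N\ge 4$ be an integer. Suppose $w\in C^2([0,\infty))$ satisfies $$-w''(t)+(N-2)w'(t)+(N-1)w(t)=\frac{N-1}{2}\,e^{-t}\,w(t)^2\qquad\text{for all }t\ge 0,$$ together with $w(0)=0$ and $\lim_{t\to+\infty}w(t)=0$. Then $w\equiv 0$.
   Context: This is the radial Dirichlet problem (after the substitutions $v=u'$, $w(t)=-v(e^{-t})$) for $\Delta^2u=S_2[u]$ in the unit ball of $\mathbb{R}^N$, where $S_2[u]$ is the sum of the $2\times2$ principal minors of the Hessian matrix of $u$; this is the case $k=2$, $\lambda=0$. *)

theory Defs
  imports "HOL-Analysis.Analysis"
begin

end

theory Submission
  imports Defs
begin

lemma mono0:
  fixes f f' :: "real \<Rightarrow> real"
  assumes d: "\<And>t. t \<ge> 0 \<Longrightarrow> (f has_real_derivative f' t) (at t within {0..})"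
    and p: "\<And>t. t \<ge> 0 \<Longrightarrow> f' t \<ge> 0" and a: "0 \<le> a" and ab: "a \<le> b"
  shows "f a \<le> f b"
proof -
  have "continuous_on {0..} f" by (rule DERIV_continuous_on) (use d in auto)
  then have c: "continuous_on {a..b} f" by (rule continuous_on_subset) (use a in auto)
  show ?thesis
  proof (rule DERIV_nonneg_imp_increasing_open[OF ab _ c])
    fix x assume x: "a < x" "x < b"
    then have "x \<in> interior {0::real..}" using a by (simp add: interior_real_atLeast)
    then have "at x within {0..} = at x" by (rule at_within_interior)
    then have "DERIV f x :> f' x" using d[of x] x a by simp
    then show "\<exists>y. DERIV f x :> y \<and> y \<ge> 0" using p[of x] x a by auto
  qed
qed

lemma no_escape:
  fixes w w' :: "real \<Rightarrow> real"
  assumes d: "\<And>t. t \<ge> 0 \<Longrightarrow> (w has_real_derivative w' t) (at t within {0..})"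
    and lim: "(w \<longlongrightarrow> 0) at_top" and dp: "\<delta> > 0" and t0: "t0 \<ge> 0"
    and le: "\<And>t. t \<ge> t0 \<Longrightarrow> w t + w' t \<le> - \<delta>"
  shows False
proof -
  have "\<forall>\<^sub>F t in at_top. dist (w t) 0 < \<delta>/2" using lim dp
    unfolding tendsto_iff by (meson half_gt_zero)
  then obtain T where T: "\<And>t. t \<ge> T \<Longrightarrow> \<bar>w t\<bar> < \<delta>/2"
    by (auto simp: eventually_at_top_linorder)
  define T1 where "T1 = max T t0"
  have T1: "T1 \<ge> 0" "T1 \<ge> T" "T1 \<ge> t0" using t0 by (auto simp: T1_def)
  define f where "f t = w t + \<delta>/2 * t" for t
  have "- f (0 + T1) \<le> - f (4 + T1)"
  proof (rule mono0[where f="\<lambda>t. - f (t + T1)" and f'="\<lambda>t. - (w' (t + T1) + \<delta>/2)" and a=0 and b=4])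
    fix t :: real assume t: "0 \<le> t"
    have "(w has_real_derivative w' (t + T1)) (at (t+T1) within {0..})" using d[of "t+T1"] t T1 by auto
    then have "(w has_real_derivative w' (t + T1)) (at (t+T1) within ((\<lambda>x. x + T1) ` {0..}))"
      by (rule has_field_derivative_subset) (use T1 in auto)
    moreover have "((\<lambda>x. x + T1) has_real_derivative 1) (at t within {0..})"
      by (auto intro!: derivative_eq_intros)
    ultimately have "(w \<circ> (\<lambda>x. x + T1) has_real_derivative w' (t + T1) * 1) (at t within {0..})"
      by (rule DERIV_image_chain)
    then have "((\<lambda>x. w (x + T1)) has_real_derivative w' (t + T1)) (at t within {0..})"
      by (simp add: o_def)
    then show "((\<lambda>t. - f (t + T1)) has_real_derivative - (w' (t + T1) + \<delta>/2)) (at t within {0..})"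
      unfolding f_def by (auto intro!: derivative_eq_intros)
    show "0 \<le> - (w' (t + T1) + \<delta> / 2)"
      using le[of "t+T1"] T[of "t+T1"] t T1 by auto
  qed simp_all
  then have "w (4 + T1) \<le> w T1 - 2*\<delta>" by (simp add: f_def algebra_simps)
  then show False using T[of T1] T[of "4 + T1"] T1 by auto
qed

lemma Fderiv:
  fixes n c :: real and w w' w'' :: "real \<Rightarrow> real"
  assumes t: "t \<ge> 0"
  and hw': "\<And>t. t \<ge> 0 \<Longrightarrow> (w has_real_derivative w' t) (at t within {0..})"
    and hw'': "\<And>t. t \<ge> 0 \<Longrightarrow> (w' has_real_derivative w'' t) (at t within {0..})"
  and w2: "w'' t = (n-2)*w' t + (n-1)*w t - c*exp(-t)*(w t)^2"
  shows "((\<lambda>t. -(n/2)*exp(-(n-2)*t)*(w t + w' t)*w t + 1/2*exp(-(n-2)*t)*(w t + w' t)^2 + c/3*exp(-(n-1)*t)*(w t)^3) has_real_derivative (c*(n-4)/6*exp(-(n-1)*t)*(w t)^3)) (at t within {0..})"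
proof -
  define E where "E = exp(-(n-2)*t)"
  define D where "D = exp(-(n-1)*t)"
  define e where "e = exp(-t)"
  have DE: "D = E * e" unfolding D_def E_def e_def by (simp add: exp_add[symmetric] algebra_simps)
  have "((\<lambda>t. -(n/2)*exp(-(n-2)*t)*(w t + w' t)*w t + 1/2*exp(-(n-2)*t)*(w t + w' t)^2 + c/3*exp(-(n-1)*t)*(w t)^3) has_real_derivative
    (-(n/2)*( (-(n-2))*E*(w t + w' t)*w t + E*(w' t + w'' t)*w t + E*(w t + w' t)*w' t) + 1/2*( -(n-2)*E*(w t + w' t)^2 + E*(2*(w t + w' t)*(w' t + w'' t)) ) + c/3*( -(n-1)*D*(w t)^3 + D*(3*(w t)^2*w' t)))) (at t within {0..})"
    unfolding E_def D_def
    apply (rule derivative_eq_intros refl hw'[OF t] hw''[OF t])+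
    apply (simp only: E_def[symmetric] D_def[symmetric])
    apply (simp add: field_simps power2_eq_square power3_eq_cube)
    done
  moreover have "(-(n/2)*( (-(n-2))*E*(w t + w' t)*w t + E*(w' t + w'' t)*w t + E*(w t + w' t)*w' t) + 1/2*( -(n-2)*E*(w t + w' t)^2 + E*(2*(w t + w' t)*(w' t + w'' t)) ) + c/3*( -(n-1)*D*(w t)^3 + D*(3*(w t)^2*w' t)))
    = c*(n-4)/6*D*(w t)^3"
    unfolding w2 DE e_def[symmetric] by (simp add: field_simps power2_eq_square power3_eq_cube)
  ultimately show ?thesis unfolding D_def by (rule DERIV_cong)
qed

theorem theorem3p3:
  fixes N :: nat and w w' w'' :: "real \<Rightarrow> real"
  assumes hN: "N \<ge> 4"
    and hw': "\<And>t. t \<ge> 0 \<Longrightarrow> (w has_real_derivative w' t) (at t within {0..})"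
    and hw'': "\<And>t. t \<ge> 0 \<Longrightarrow> (w' has_real_derivative w'' t) (at t within {0..})"
    and hcont: "continuous_on {0..} w''"
    and hode: "\<And>t. t \<ge> 0 \<Longrightarrow>
        - w'' t + (real N - 2) * w' t + (real N - 1) * w t
          = (real N - 1) / 2 * exp (- t) * (w t)\<^sup>2"
    and h0: "w 0 = 0"
    and hinf: "(w \<longlongrightarrow> 0) at_top"
  shows "\<forall>t\<ge>0. w t = 0"
proof -
  define n where "n = real N"
  have n4: "n \<ge> 4" using hN by (simp add: n_def)
  define c where "c = (n - 1) / 2"
  have c0: "c \<ge> 0" using n4 by (simp add: c_def)
  have w2: "\<And>t. t \<ge> 0 \<Longrightarrow> w'' t = (n-2)*w' t + (n-1)*w t - c*exp(-t)*(w t)^2"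
    using hode unfolding n_def c_def by (smt (verit))
  obtain M where M0: "M \<ge> 0" and M: "\<And>t. t \<ge> 0 \<Longrightarrow> \<bar>w t\<bar> \<le> M"
  proof -
    have "\<forall>\<^sub>F t in at_top. dist (w t) 0 < 1" using hinf unfolding tendsto_iff by simp
    then obtain T where T: "\<And>t. t \<ge> T \<Longrightarrow> \<bar>w t\<bar> < 1"
      by (auto simp: eventually_at_top_linorder)
    have "continuous_on {0..} w" by (rule DERIV_continuous_on) (use hw' in auto)
    then have "continuous_on {0..max T 0} w" by (rule continuous_on_subset) auto
    then have "compact (w ` {0..max T 0})" by (rule compact_continuous_image) simp
    then have "bounded (w ` {0..max T 0})" by (rule compact_imp_bounded)
    then obtain a where a: "\<And>x. x \<in> w ` {0..max T 0} \<Longrightarrow> \<bar>x\<bar> \<le> a"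
      unfolding bounded_real by auto
    show ?thesis
    proof (rule that[of "max a 1"])
      fix t :: real assume t: "t \<ge> 0"
      show "\<bar>w t\<bar> \<le> max a 1"
      proof (cases "t \<le> max T 0")
        case True then show ?thesis using a[of "w t"] t by force
      next
        case False then have "T \<le> t" by simp
        then show ?thesis using T[of t] by simp
      qed
    qed simp
  qed
  define h where "h t = exp(-(n-1)*t) * (w t + w' t)" for t
  have hd: "(h has_real_derivative (-c*exp(-n*t)*(w t)^2)) (at t within {0..})" if t: "t \<ge> 0" for t
  proof -
    have "(h has_real_derivative (exp(-(n-1)*t) * (-(n-1)) * (w t + w' t) + exp(-(n-1)*t)*(w' t + w'' t))) (at t within {0..})"
      unfolding h_def
      apply (rule derivative_eq_intros refl hw'[OF t] hw''[OF t])+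
      apply (simp add: algebra_simps)
      done
    moreover have "exp(-(n-1)*t) * (-(n-1)) * (w t + w' t) + exp(-(n-1)*t)*(w' t + w'' t) = -c*exp(-n*t)*(w t)^2"
    proof -
      have e: "exp(-n*t) = exp(-(n-1)*t) * exp(-t)" by (simp add: exp_add[symmetric] algebra_simps)
      show ?thesis unfolding w2[OF t] e by (simp add: algebra_simps)
    qed
    ultimately show ?thesis by (rule DERIV_cong)
  qed
  have wh: "w t + w' t = exp((n-1)*t) * h t" for t
  proof -
    have "exp((n-1)*t) * exp(-(n-1)*t) = 1" by (simp only: minus_mult_left[symmetric] exp_minus_inverse)
    then show ?thesis unfolding h_def by (metis mult.assoc mult_1)
  qed
  have hmono: "h b \<le> h a" if "0 \<le> a" "a \<le> b" for a b
  proof -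
    have "(\<lambda>t. - h t) a \<le> (\<lambda>t. - h t) b"
    proof (rule mono0[where f="\<lambda>t. - h t" and f'="\<lambda>t. c*exp(-n*t)*(w t)^2"])
      fix t :: real assume t: "0 \<le> t"
      show "((\<lambda>t. - h t) has_real_derivative c*exp(-n*t)*(w t)^2) (at t within {0..})"
        using DERIV_minus[OF hd[OF t]] by simp
      show "0 \<le> c*exp(-n*t)*(w t)^2" using c0 by simp
    qed (use that in auto)
    then show ?thesis by simp
  qed
  have hpos: "h t \<ge> 0" if t: "t \<ge> 0" for t
  proof (rule ccontr)
    assume "\<not> h t \<ge> 0"
    then have neg: "h t < 0" by simp
    show False
    proof (rule no_escape[OF hw' hinf _ t])
      show "0 < - h t" using neg by simp
      fix s assume s: "t \<le> s"
      have "w s + w' s = exp((n-1)* s) * h s" by (rule wh)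
      also have "\<dots> \<le> exp((n-1)* s) * h t" using hmono[OF t s] by simp
      also have "\<dots> \<le> 1 * h t"
        using neg t s n4 by (intro mult_right_mono_neg) auto
      finally show "w s + w' s \<le> - (- h t)" by simp
    qed simp
  qed
  define K where "K = c * M^2 / n"
  have K0: "K \<ge> 0" using c0 n4 by (simp add: K_def)
  have hub: "h t \<le> K * exp(-n*t)" if t: "t \<ge> 0" for t
  proof (rule ccontr)
    define k where "k s = h s - K * exp(-n* s)" for s
    have kmono: "k a \<le> k b" if "0 \<le> a" "a \<le> b" for a b
    proof (rule mono0[where f=k and f'="\<lambda>s. c*exp(-n* s)*(M^2 - (w s)^2)"])
      fix s :: real assume s: "0 \<le> s"
      show "(k has_real_derivative c*exp(-n* s)*(M^2 - (w s)^2)) (at s within {0..})"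
      proof -
        have e: "((\<lambda>s. K * exp(-n* s)) has_real_derivative -n*K*exp(-n* s)) (at s within {0..})"
          by (rule derivative_eq_intros refl)+ simp
        have "(k has_real_derivative (-c*exp(-n* s)*(w s)^2 - (-n*K*exp(-n* s)))) (at s within {0..})"
          unfolding k_def[abs_def] by (rule DERIV_diff[OF hd[OF s] e])
        moreover have "-c*exp(-n* s)*(w s)^2 - (-n*K*exp(-n* s)) = c*exp(-n* s)*(M^2 - (w s)^2)"
          using n4 by (simp add: K_def field_simps)
        ultimately show ?thesis by (rule DERIV_cong)
      qed
      have "(w s)^2 \<le> M^2" using power_mono[OF M[OF s] abs_ge_zero, of 2] by simp
      then show "0 \<le> c*exp(-n* s)*(M^2 - (w s)^2)" using c0 by simp
    qed (use that in auto)
    assume "\<not> h t \<le> K * exp(-n*t)"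
    then have pos: "k t > 0" by (simp add: k_def)
    show False
    proof (rule no_escape[where w="\<lambda>s. - w s" and w'="\<lambda>s. - w' s", OF _ _ _ t])
      show "0 < k t" by (rule pos)
      show "((\<lambda>s. - w s) \<longlongrightarrow> 0) at_top" using tendsto_minus[OF hinf] by simp
      fix s :: real assume s: "0 \<le> s"
      show "((\<lambda>s. - w s) has_real_derivative - w' s) (at s within {0..})"
        by (rule DERIV_minus[OF hw'[OF s]])
    next
      fix s assume s: "t \<le> s"
      have "k t \<le> k s" using kmono t s by simp
      then have "k t \<le> h s" using K0 unfolding k_def by (smt (verit) exp_gt_zero mult_nonneg_nonneg)
      have "k t \<le> 1 * h s" using \<open>k t \<le> h s\<close> by simp
      also have "\<dots> \<le> exp((n-1)* s) * h s"
        using pos \<open>k t \<le> h s\<close> t s n4 by (intro mult_right_mono) auto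
      also have "\<dots> = w s + w' s" by (rule wh[symmetric])
      finally show "- w s + - w' s \<le> - k t" by simp
    qed
  qed
  have sbounds: "0 \<le> w t + w' t \<and> w t + w' t \<le> K * exp(-t)" if t: "t \<ge> 0" for t
  proof
    show "0 \<le> w t + w' t" unfolding wh using hpos[OF t] by simp
    have "w t + w' t \<le> exp((n-1)*t) * (K * exp(-n*t))"
      unfolding wh using hub[OF t] by (intro mult_left_mono) auto
    also have "\<dots> = K * exp(-t)" by (simp add: exp_add[symmetric] algebra_simps)
    finally show "w t + w' t \<le> K * exp(-t)" .
  qed
  define g where "g t = exp t * w t" for t
  have gd: "(g has_real_derivative exp t * (w t + w' t)) (at t within {0..})" if t: "t \<ge> 0" for t
    unfolding g_def
    apply (rule derivative_eq_intros refl hw'[OF t])+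
    apply (simp add: algebra_simps)
    done
  have wpos: "w t \<ge> 0" if t: "t \<ge> 0" for t
  proof -
    have "g 0 \<le> g t"
      by (rule mono0[OF gd]) (use sbounds t in auto)
    then show ?thesis by (simp add: g_def h0 zero_le_mult_iff)
  qed
  define F where "F t = -(n/2)*exp(-(n-2)*t)*(w t + w' t)*w t + 1/2*exp(-(n-2)*t)*(w t + w' t)^2 + c/3*exp(-(n-1)*t)*(w t)^3" for t
  have Fmono: "F 0 \<le> F t" if t: "t \<ge> 0" for t
  proof (rule mono0[where f=F and f'="\<lambda>t. c*(n-4)/6*exp(-(n-1)*t)*(w t)^3"])
    fix s :: real assume s: "0 \<le> s"
    show "(F has_real_derivative c*(n-4)/6*exp(-(n-1)* s)*(w s)^3) (at s within {0..})"
      unfolding F_def[abs_def] by (rule Fderiv[OF s hw' hw'' w2[OF s]])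
    show "0 \<le> c*(n-4)/6*exp(-(n-1)* s)*(w s)^3" using c0 n4 wpos[OF s] by simp
  qed (use t in auto)
  define C where "C = K^2/2 + c*M^3/3"
  have Fub: "F t \<le> C * exp(-t)" if t: "t \<ge> 0" for t
  proof -
    have s: "0 \<le> w t + w' t" "w t + w' t \<le> K * exp(-t)" using sbounds[OF t] by auto
    have E1: "exp(-(n-2)*t) \<le> 1" using n4 t by (simp add: mult_nonpos_nonneg)
    have e1: "exp(-t) \<le> 1" using t by simp
    have t1: "-(n/2)*exp(-(n-2)*t)*(w t + w' t)*w t \<le> 0"
      using n4 s wpos[OF t] by (simp add: mult_nonneg_nonneg mult_le_0_iff)
    have "(w t + w' t)^2 \<le> (K*exp(-t))^2" using s by (intro power_mono) auto
    also have "\<dots> = K^2 * (exp(-t) * exp(-t))" by (simp add: power2_eq_square algebra_simps)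
    also have "\<dots> \<le> K^2 * (1 * exp(-t))"
      using e1 by (intro mult_left_mono mult_right_mono) auto
    finally have sq: "(w t + w' t)^2 \<le> K^2 * exp(-t)" by simp
    have t2: "1/2*exp(-(n-2)*t)*(w t + w' t)^2 \<le> K^2/2 * exp(-t)"
    proof -
      have "exp(-(n-2)*t)*(w t + w' t)^2 \<le> 1 * (w t + w' t)^2"
        using E1 by (intro mult_right_mono) auto
      then show ?thesis using sq by simp
    qed
    have "1 * t \<le> (n-1)*t" using n4 t by (intro mult_right_mono) auto
    then have D1: "exp(-(n-1)*t) \<le> exp(-t)" by (simp add: algebra_simps)
    have w3: "(w t)^3 \<le> M^3" using M[OF t] wpos[OF t] by (intro power_mono) auto
    have t3: "c/3*exp(-(n-1)*t)*(w t)^3 \<le> c/3*exp(-t)*M^3"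
      using c0 D1 w3 wpos[OF t] by (intro mult_mono mult_left_mono) auto
    have Ce: "C * exp(-t) = K^2/2 * exp(-t) + c/3*exp(-t)*M^3" by (simp add: C_def algebra_simps)
    show ?thesis using t1 t2 t3 unfolding F_def Ce by linarith
  qed
  have F0: "F 0 = (w' 0)^2 / 2" by (simp add: F_def h0)
  have "(w' 0)^2 / 2 \<le> 0"
  proof (rule tendsto_le[OF trivial_limit_at_top_linorder])
    show "((\<lambda>t. C * exp(-t)) \<longlongrightarrow> 0) at_top"
      by (rule tendsto_mult_right_zero) (rule filterlim_compose[OF exp_at_bot filterlim_uminus_at_bot_at_top])
    show "((\<lambda>t. (w' 0)^2 / 2) \<longlongrightarrow> (w' 0)^2 / 2) at_top" by simp
    show "\<forall>\<^sub>F t in at_top. C * exp(-t) \<ge> (w' 0)^2 / 2"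
      unfolding eventually_at_top_linorder
      using Fmono Fub F0 by (intro exI[of _ 0]) force
  qed
  then have w'0: "w' 0 = 0" by simp
  have hz: "h t = 0" if t: "t \<ge> 0" for t
    using hmono[OF order_refl t] hpos[OF t] by (simp add: h_def h0 w'0)
  show ?thesis
  proof (intro allI impI)
    fix t :: real assume t: "t \<ge> 0"
    have gd0: "exp s * (w s + w' s) = 0" if "s \<ge> 0" for s unfolding wh using hz[OF that] by simp
    have "(\<lambda>s. - g s) 0 \<le> (\<lambda>s. - g s) t"
    proof (rule mono0[where f="\<lambda>s. - g s" and f'="\<lambda>s. 0"])
      fix s :: real assume s: "0 \<le> s"
      show "((\<lambda>s. - g s) has_real_derivative 0) (at s within {0..})"
        using DERIV_minus[OF gd[OF s]] gd0[OF s] by simp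
    qed (use t in auto)
    moreover have "g 0 \<le> g t"
      by (rule mono0[OF gd]) (use sbounds t in auto)
    ultimately show "w t = 0" by (simp add: g_def h0)
  qed
qed

end
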